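(* Let $Y$ be a Banach space with type $\tau\in[1,2)$, and let $\alpha\in[0,\frac12)$ and $q\in(2,\infty)$ satisfy $\frac1q<\frac1\tau-\alpha$. Let $\Phi\in B^{\frac1\tau-\frac12}_{q,\tau}(0,T;Y)\cap L^\infty(0,T;Y)$ and for $t\in[0,T]$ define $\Phi_{\alpha,t}:(0,t)\to Y$ by $\Phi_{\alpha,t}(s)=(t-s)^{-\alpha}\Phi(s)$. Then there exists $\varepsilon_0>0$ such that for all $T_0\in[0,T]$, $$\sup_{0\le t\le T_0}\|\Phi_{\alpha,t}\|_{B^{\frac1\tau-\frac12}_{\tau,\tau}(0,t;Y)}\lesssim T_0^{\varepsilon_0}\|\Phi\|_{L^\infty(0,T_0;Y)\cap B^{\frac1\tau-\frac12}_{q,\tau}(0,T_0;Y)},$$ with implied constant independent of $T_0$.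
   Context: For an interval $I=(a,b)$, $q,r\in[1,\infty]$ and $s\in(0,1)$, $B^s_{q,r}(I;Y)$ is the space of $f\in L^q(I;Y)$ with $\|f\|_{B^s_{q,r}(I;Y)}:=\|f\|_{L^q(I;Y)}+\big(\int_0^1\rho^{-sr}\sup_{|h|<\rho}\|T^I_hf-f\|^r_{L^q(I;Y)}\frac{d\rho}\rho\big)^{1/r}<\infty$, where $T^I_hf(s)=f(s+h)$ if $s+h\in I$ and $0$ otherwise. The norm on an intersection of two spaces is the sum of the norms. *)

theory Defs
  imports "HOL-Analysis.Analysis"
begin

definition enn_powr :: "ennreal \<Rightarrow> real \<Rightarrow> ennreal" where
  "enn_powr x p = (if x = \<infinity> then \<infinity> else ennreal (enn2real x powr p))"

text \<open>Banach space of (Rademacher) type tau, with the Rademacher average written as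
  a finite average over all sign vectors.\<close>
definition rademacher_type :: "'a::real_normed_vector itself \<Rightarrow> real \<Rightarrow> bool" where
  "rademacher_type _ \<tau> \<longleftrightarrow> (\<exists>C. \<forall>(n::nat) (x::nat \<Rightarrow> 'a).
     ((\<Sum>\<epsilon>\<in>({..<n} \<rightarrow>\<^sub>E {-1, 1::real}). norm (\<Sum>i<n. \<epsilon> i *\<^sub>R x i) powr \<tau>) / 2 ^ n) powr (1 / \<tau>)
       \<le> C * (\<Sum>i<n. norm (x i) powr \<tau>) powr (1 / \<tau>))"

definition strongly_measurable_on :: "real set \<Rightarrow> (real \<Rightarrow> 'a::real_normed_vector) \<Rightarrow> bool" where
  "strongly_measurable_on I f \<longleftrightarrow> (\<exists>g :: nat \<Rightarrow> real \<Rightarrow> 'a.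
     (\<forall>n. g n \<in> borel_measurable lebesgue \<and> finite (range (g n))) \<and>
     (AE s in lebesgue. s \<in> I \<longrightarrow> (\<lambda>n. g n s) \<longlonglongrightarrow> f s))"

definition Lq_norm :: "real \<Rightarrow> real set \<Rightarrow> (real \<Rightarrow> 'a::real_normed_vector) \<Rightarrow> ennreal" where
  "Lq_norm q I f = enn_powr (\<integral>\<^sup>+ s\<in>I. ennreal (norm (f s) powr q) \<partial>lebesgue) (1 / q)"

definition Linf_norm :: "real set \<Rightarrow> (real \<Rightarrow> 'a::real_normed_vector) \<Rightarrow> ennreal" where
  "Linf_norm I f = Inf {C. AE s in lebesgue. s \<in> I \<longrightarrow> ennreal (norm (f s)) \<le> C}"

definition transl :: "real set \<Rightarrow> real \<Rightarrow> (real \<Rightarrow> 'a::zero) \<Rightarrow> real \<Rightarrow> 'a" where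
  "transl I h f s = (if s + h \<in> I then f (s + h) else 0)"

definition besov_norm :: "real \<Rightarrow> real \<Rightarrow> real \<Rightarrow> real set \<Rightarrow> (real \<Rightarrow> 'a::real_normed_vector) \<Rightarrow> ennreal" where
  "besov_norm q r sm I f = Lq_norm q I f +
     enn_powr (\<integral>\<^sup>+ \<rho>\<in>{0<..<1}.
        ennreal (\<rho> powr (- sm * r) / \<rho>) *
        enn_powr (SUP h\<in>{h. \<bar>h\<bar> < \<rho>}. Lq_norm q I (\<lambda>s. transl I h f s - f s)) r \<partial>lborel) (1 / r)"

end

theory Submission
  imports Defs
begin


lemma enn_powr_ennreal: "0 \<le> x \<Longrightarrow> enn_powr (ennreal x) p = ennreal (x powr p)"
  by (simp add: enn_powr_def)

lemma enn_powr_zero[simp]: "enn_powr 0 p = 0"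
  by (simp add: enn_powr_def)

lemma enn_powr_top[simp]: "enn_powr top p = top"
  by (simp add: enn_powr_def)

lemma enn_powr_mono: assumes "x \<le> y" "0 \<le> p" shows "enn_powr x p \<le> enn_powr y p"
proof (cases "y = top")
  case True then show ?thesis by simp
next
  case False
  then have "x \<noteq> top" using assms by (auto simp: top_unique)
  then show ?thesis using False assms
    by (auto simp: enn_powr_def top.not_eq_extremum intro!: ennreal_leI powr_mono2 enn2real_mono)
qed

lemma enn_powr_powr: assumes "0 < a" shows "enn_powr (enn_powr x a) b = enn_powr x (a * b)"
  by (cases "x = top") (auto simp: enn_powr_def powr_powr)

lemma enn_powr_mult: assumes "0 \<le> c" "0 < p"
  shows "enn_powr (ennreal c * x) p = ennreal (c powr p) * enn_powr x p"
proof (cases "c = 0")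
  case True then show ?thesis by simp
next
  case False
  show ?thesis
  proof (cases "x = top")
    case True then show ?thesis using False assms
      by (simp add: ennreal_mult_top enn_powr_def ennreal_mult_eq_top_iff)
  next
    case xf: False
    then obtain y where y: "x = ennreal y" "0 \<le> y" by (cases x) auto
    then show ?thesis using assms
      by (simp add: enn_powr_def ennreal_mult''[symmetric] powr_mult ennreal_mult_eq_top_iff
          flip: ennreal_mult)
  qed
qed

lemma le_powr_small: fixes x e :: real assumes "0 \<le> x" "x \<le> 1" "e \<le> 1"
  shows "x \<le> x powr e"
  using powr_mono'[of e 1 x] assms by simp

lemma powr_add_le_real: fixes a b e :: real assumes "0 \<le> a" "0 \<le> b" "0 < e" "e \<le> 1"
  shows "(a + b) powr e \<le> a powr e + b powr e"
proof (cases "a + b = 0")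
  case True then show ?thesis using assms by simp
next
  case False
  then have s: "a + b > 0" using assms by simp
  define th where "th = a / (a + b)"
  have th: "0 \<le> th" "th \<le> 1" using assms s by (auto simp: th_def)
  have a: "a = th * (a+b)" and b: "b = (1 - th) * (a+b)" using s by (auto simp: th_def field_simps)
  have "th \<le> th powr e" using th assms by (intro le_powr_small) auto
  moreover have "1 - th \<le> (1 - th) powr e" using th assms by (intro le_powr_small) auto
  ultimately have "(a+b) powr e * 1 \<le> (a+b) powr e * (th powr e + (1-th) powr e)"
    by (intro mult_left_mono) auto
  also have "\<dots> = a powr e + b powr e"
  proof -
    have "a powr e = th powr e * (a+b) powr e" by (subst a) (use th s in \<open>simp add: powr_mult\<close>)
    moreover have "b powr e = (1-th) powr e * (a+b) powr e" by (subst b) (use th s in \<open>simp add: powr_mult\<close>)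
    ultimately show ?thesis by (simp add: algebra_simps)
  qed
  finally show ?thesis by simp
qed

lemma enn_powr_add_le: assumes "0 < e" "e \<le> 1"
  shows "enn_powr (x + y) e \<le> enn_powr x e + enn_powr y e"
proof (cases "x = top \<or> y = top")
  case True then show ?thesis by auto
next
  case False
  then obtain a b where ab: "x = ennreal a" "y = ennreal b" "0 \<le> a" "0 \<le> b"
    by (cases x; cases y) auto
  then show ?thesis using assms
    by (simp add: enn_powr_ennreal flip: ennreal_plus) (intro ennreal_leI powr_add_le_real, auto)
qed


lemma young_opt:
  fixes A X :: ennreal and W r r' :: real
  assumes W: "W > 0" and r: "r > 1" "r' > 1" and rr: "1/r + 1/r' = 1"
    and H: "\<And>l. l > 0 \<Longrightarrow> A \<le> ennreal (l powr r * W) + ennreal (l powr (-r')) * X"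
  shows "A \<le> ennreal (2 * W powr (1/r)) * enn_powr X (1/r')"
proof (cases "X = top")
  case True
  have "ennreal (2 * W powr (1/r)) > 0" using W by simp
  then show ?thesis using True by (simp add: ennreal_mult_top)
next
  case False
  then obtain x where x: "X = ennreal x" "0 \<le> x" by (cases X) auto
  have rr2: "r + r' = r * r'" using rr r by (simp add: field_simps)
  show ?thesis
  proof (cases "x = 0")
    case True
    have "A \<le> 0"
    proof (rule ennreal_le_epsilon)
      fix e :: real assume e: "0 < e"
      define l where "l = (e / W) powr (1/r)"
      have l: "l > 0" using e W by (simp add: l_def)
      have "l powr r * W = e" using e W r by (simp add: l_def powr_powr)
      then show "A \<le> 0 + ennreal e" using H[OF l] x True by simp
    qed
    then show ?thesis by simp
  next
    case False
    then have xp: "x > 0" using x by simp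
    define l where "l = (x / W) powr (1/(r+r'))"
    have l: "l > 0" using xp W by (simp add: l_def)
    have e1: "r / (r + r') = 1/r'" using rr2 r by (simp add: field_simps)
    have e2: "r' / (r + r') = 1/r" using rr2 r by (simp add: field_simps)
    have "l powr r * W = (x / W) powr (1/r') * W"
      using e1 by (simp add: l_def powr_powr)
    also have "\<dots> = x powr (1/r') * W powr (1/r)"
    proof -
      have "(x / W) powr (1/r') * W = x powr (1/r') * W powr (1 - 1/r')"
        using xp W by (simp add: powr_divide powr_diff field_simps)
      moreover have "1 - 1/r' = 1/r" using rr by simp
      ultimately show ?thesis by simp
    qed
    finally have t1: "l powr r * W = x powr (1/r') * W powr (1/r)" .
    have "l powr (-r') * x = (x / W) powr (- (1/r)) * x"
      using e2 by (simp add: l_def powr_powr)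
    also have "\<dots> = x powr (1 - 1/r) * W powr (1/r)"
      using xp W by (simp add: powr_divide powr_minus powr_diff field_simps)
    also have "\<dots> = x powr (1/r') * W powr (1/r)"
    proof -
      have "1 - 1/r = 1/r'" using rr by simp
      then show ?thesis by simp
    qed
    finally have t2: "l powr (-r') * x = x powr (1/r') * W powr (1/r)" .
    have "A \<le> ennreal (l powr r * W) + ennreal (l powr (-r')) * X" using H[OF l] .
    also have "\<dots> = ennreal (l powr r * W + l powr (-r') * x)"
      using x l W by (simp add: ennreal_plus ennreal_mult'')
    also have "\<dots> = ennreal (2 * W powr (1/r)) * enn_powr X (1/r')"
      using x t1 t2 by (simp add: enn_powr_ennreal ennreal_mult''[symmetric] algebra_simps)
    finally show ?thesis .
  qed
qed



lemma powr_sum_le2: fixes x y p :: real assumes "0 \<le> x" "0 \<le> y" "0 \<le> p"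
  shows "(x + y) powr p \<le> 2 powr p * (x powr p + y powr p)"
proof -
  have "(x + y) powr p \<le> (2 * max x y) powr p" using assms by (intro powr_mono2) auto
  also have "\<dots> = 2 powr p * max x y powr p" using assms by (simp add: powr_mult)
  also have "\<dots> \<le> 2 powr p * (x powr p + y powr p)"
    by (intro mult_left_mono) (auto simp: max_def)
  finally show ?thesis .
qed

lemma min_powr_le: fixes x y k :: real
  shows "min x y powr k \<le> x powr k + y powr k"
  by (cases "x \<le> y") (auto simp: min_def)

lemma diff_powr_bound:
  fixes x y a g :: real
  assumes "0 < x" "0 < y" "0 \<le> a" "a \<le> 1" "0 \<le> g" "g \<le> 1"
  shows "\<bar>x powr (-a) - y powr (-a)\<bar> \<le> \<bar>x - y\<bar> powr g * min x y powr (-(a+g))"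
proof -
  have main: "\<bar>u powr (-a) - v powr (-a)\<bar> \<le> \<bar>u - v\<bar> powr g * min u v powr (-(a+g))"
    if uv: "0 < u" "u \<le> v" for u v :: real
  proof -
    have "v powr (-a) \<le> u powr (-a)" using uv assms by (intro powr_mono2') auto
    then have "\<bar>u powr (-a) - v powr (-a)\<bar> = u powr (-a) - v powr (-a)" by simp
    also have "\<dots> = u powr (-a) * (1 - (u/v) powr a)"
      using uv by (simp add: powr_divide powr_minus field_simps)
    also have "\<dots> \<le> u powr (-a) * (1 - u/v)"
    proof -
      have "u/v \<le> (u/v) powr a" using uv assms by (intro le_powr_small) auto
      then show ?thesis by (intro mult_left_mono) auto
    qed
    also have "\<dots> = u powr (-a) * ((v - u)/v)" using uv by (simp add: field_simps)
    also have "\<dots> \<le> u powr (-a) * ((v - u)/v) powr g"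
      using uv assms by (intro mult_left_mono le_powr_small) auto
    also have "\<dots> \<le> u powr (-a) * ((v - u)/u) powr g"
      using uv assms by (intro mult_left_mono powr_mono2 divide_left_mono) auto
    also have "\<dots> = (v - u) powr g * u powr (-(a+g))"
    proof -
      have "u powr (-(a+g)) = u powr (-a) * u powr (-g)" by (simp add: powr_add[symmetric])
      then show ?thesis using uv by (simp add: powr_divide powr_minus field_simps)
    qed
    finally show ?thesis using uv by (simp add: min_def)
  qed
  show ?thesis
  proof (cases "x \<le> y")
    case True then show ?thesis using main[of x y] assms by simp
  next
    case False then show ?thesis using main[of y x] assms by (simp add: abs_minus_commute min.commute)
  qed
qed

lemma out_bound:
  fixes u mu h a g :: real
  assumes "0 < mu" "mu \<le> u" "mu \<le> \<bar>h\<bar>" "0 \<le> a" "0 \<le> g"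
  shows "u powr (-a) \<le> \<bar>h\<bar> powr g * mu powr (-(a+g))"
proof -
  have "u powr (-a) \<le> mu powr (-a)" using assms by (intro powr_mono2') auto
  also have "\<dots> = mu powr g * mu powr (-(a+g))" using assms by (simp add: powr_add[symmetric])
  also have "\<dots> \<le> \<bar>h\<bar> powr g * mu powr (-(a+g))"
    using assms by (intro mult_right_mono powr_mono2) auto
  finally show ?thesis .
qed


lemma pointwise:
  fixes \<phi>0 \<phi>1 :: "'a::real_normed_vector" and s t h a g p m :: real
  assumes s: "0 < s" "s < t" and a: "0 \<le> a" "a \<le> 1" and g: "0 \<le> g" "g \<le> 1"
    and p: "0 \<le> p" and m: "norm \<phi>0 \<le> m"
  shows "norm ((if s + h \<in> {0<..<t} then (t-(s+h)) powr (-a) *\<^sub>R \<phi>1 else 0) - (t-s) powr (-a) *\<^sub>R \<phi>0) powr p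
   \<le> 2 powr p * ((if s + h \<in> {0<..<t} then (t-(s+h)) powr (-a*p) * norm (\<phi>1 - \<phi>0) powr p else 0)
      + m powr p * \<bar>h\<bar> powr (g*p) * ((t-s) powr (-((a+g)*p)) + s powr (-((a+g)*p))
          + (if s + h \<in> {0<..<t} then (t-(s+h)) powr (-((a+g)*p)) else 0)))"
    (is "?L \<le> 2 powr p * (?A + m powr p * \<bar>h\<bar> powr (g*p) * ?V)")
proof -
  have m0: "0 \<le> m" using m norm_ge_zero order.trans by blast
  define k where "k = (a+g)*p"
  have Vnn: "0 \<le> ?V" by auto
  have hp: "0 \<le> m powr p * \<bar>h\<bar> powr (g*p) * ?V" using Vnn by simp
  show ?thesis
  proof (cases "s + h \<in> {0<..<t}")
    case True
    define x where "x = t - (s+h)"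
    define y where "y = t - s"
    have xy: "0 < x" "0 < y" "\<bar>x - y\<bar> = \<bar>h\<bar>" using True s by (auto simp: x_def y_def)
    define n where "n = norm (\<phi>1 - \<phi>0)"
    define mu where "mu = min x y"
    have mu: "0 < mu" using xy by (simp add: mu_def)
    have D: "(x powr (-a) *\<^sub>R \<phi>1 - y powr (-a) *\<^sub>R \<phi>0)
       = x powr (-a) *\<^sub>R (\<phi>1 - \<phi>0) + (x powr (-a) - y powr (-a)) *\<^sub>R \<phi>0"
      by (simp add: algebra_simps)
    have "norm (x powr (-a) *\<^sub>R \<phi>1 - y powr (-a) *\<^sub>R \<phi>0)
        \<le> x powr (-a) * n + \<bar>x powr (-a) - y powr (-a)\<bar> * norm \<phi>0"
      unfolding D n_def by (rule order.trans[OF norm_triangle_ineq]) simp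
    also have "\<dots> \<le> x powr (-a) * n + (\<bar>h\<bar> powr g * mu powr (-(a+g))) * m"
      using diff_powr_bound[of x y a g] xy a g m unfolding mu_def
      by (intro add_left_mono mult_mono) auto
    finally have nD: "norm (x powr (-a) *\<^sub>R \<phi>1 - y powr (-a) *\<^sub>R \<phi>0)
        \<le> x powr (-a) * n + (\<bar>h\<bar> powr g * mu powr (-(a+g))) * m" .
    have L: "?L = norm (x powr (-a) *\<^sub>R \<phi>1 - y powr (-a) *\<^sub>R \<phi>0) powr p"
      using True by (simp add: x_def y_def)
    have "?L \<le> (x powr (-a) * n + (\<bar>h\<bar> powr g * mu powr (-(a+g))) * m) powr p"
      unfolding L using nD p by (intro powr_mono2) auto
    also have "\<dots> \<le> 2 powr p * ((x powr (-a) * n) powr p + ((\<bar>h\<bar> powr g * mu powr (-(a+g))) * m) powr p)"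
      using p m0 by (intro powr_sum_le2) (auto simp: n_def)
    also have "(x powr (-a) * n) powr p = x powr (-a*p) * n powr p"
      by (simp add: powr_mult powr_powr n_def)
    also have "((\<bar>h\<bar> powr g * mu powr (-(a+g))) * m) powr p = m powr p * \<bar>h\<bar> powr (g*p) * mu powr (-k)"
      using m0 by (simp add: powr_mult powr_powr k_def) (simp add: algebra_simps)
    also have "m powr p * \<bar>h\<bar> powr (g*p) * mu powr (-k) \<le> m powr p * \<bar>h\<bar> powr (g*p) * ?V"
    proof -
      have "mu powr (-k) \<le> x powr (-k) + y powr (-k)" unfolding mu_def by (rule min_powr_le)
      also have "\<dots> \<le> ?V" using True by (simp add: x_def y_def k_def)
      finally show ?thesis by (intro mult_left_mono) auto
    qed
    finally show ?thesis using True by (simp add: x_def n_def)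
  next
    case False
    define y where "y = t - s"
    define mu where "mu = min y s"
    have mu: "0 < mu" "mu \<le> y" using s by (auto simp: mu_def y_def)
    have muh: "mu \<le> \<bar>h\<bar>" using False s by (auto simp: mu_def y_def)
    have "?L = (y powr (-a) * norm \<phi>0) powr p" using False by (simp add: y_def del: greaterThanLessThan_iff)
    also have "\<dots> \<le> ((\<bar>h\<bar> powr g * mu powr (-(a+g))) * m) powr p"
      using out_bound[OF mu(1,2) muh a(1) g(1)] m p
      by (intro powr_mono2 mult_mono) auto
    also have "\<dots> = m powr p * \<bar>h\<bar> powr (g*p) * mu powr (-k)"
      using m0 by (simp add: powr_mult powr_powr k_def) (simp add: algebra_simps)
    also have "\<dots> \<le> m powr p * \<bar>h\<bar> powr (g*p) * ?V"
    proof -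
      have "mu powr (-k) \<le> y powr (-k) + s powr (-k)" unfolding mu_def by (rule min_powr_le)
      also have "\<dots> \<le> ?V" using False by (simp add: y_def k_def)
      finally show ?thesis by (intro mult_left_mono) auto
    qed
    also have "\<dots> \<le> 2 powr p * (?A + m powr p * \<bar>h\<bar> powr (g*p) * ?V)"
    proof -
      have "1 \<le> 2 powr p" using p by (simp add: ge_one_powr_ge_zero)
      have A0: "?A = 0" using False by auto
      have "m powr p * \<bar>h\<bar> powr (g*p) * ?V = 1 * (m powr p * \<bar>h\<bar> powr (g*p) * ?V)" by simp
      also have "\<dots> \<le> 2 powr p * (m powr p * \<bar>h\<bar> powr (g*p) * ?V)"
        using \<open>1 \<le> 2 powr p\<close> hp by (rule mult_right_mono)
      finally show ?thesis unfolding A0 by simp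
    qed
    finally show ?thesis .
  qed
qed



lemma borel_to_lebesgue: "f \<in> borel_measurable borel \<Longrightarrow> f \<in> borel_measurable lebesgue"
  by (rule measurable_completion) simp

lemma int_pow_lborel:
  fixes b c :: real assumes b: "0 < b" and c: "0 < c"
  shows "(\<integral>\<^sup>+ x. ennreal (x powr (b - 1)) * indicator {0<..<c} x \<partial>lborel) \<le> ennreal (c powr b / b)"
proof -
  have hi: "((\<lambda>x. x powr (b - 1)) has_integral (c powr (b - 1 + 1) / (b - 1 + 1))) {0..c}"
    using b c by (intro has_integral_powr_from_0) auto
  have eq: "(\<integral>\<^sup>+ x. ennreal (x powr (b - 1)) * indicator {0..c} x \<partial>lborel) = ennreal (c powr b / b)"
    using nn_integral_has_integral_lebesgue'[OF _ hi] by simp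
  have "(\<integral>\<^sup>+ x. ennreal (x powr (b - 1)) * indicator {0<..<c} x \<partial>lborel)
      \<le> (\<integral>\<^sup>+ x. ennreal (x powr (b - 1)) * indicator {0..c} x \<partial>lborel)"
    by (intro nn_integral_mono) (auto simp: indicator_def)
  then show ?thesis using eq by simp
qed

lemma int_pow0:
  fixes k t :: real assumes k: "0 \<le> k" "k < 1" and t: "0 < t"
  shows "(\<integral>\<^sup>+ x. ennreal (x powr (-k)) * indicator {0<..<t} x \<partial>lebesgue) \<le> ennreal (t powr (1-k) / (1-k))"
  using int_pow_lborel[of "1-k" t] k t by (simp add: nn_integral_completion)

lemma int_powt:
  fixes k t :: real assumes k: "0 \<le> k" "k < 1" and t: "0 < t"
  shows "(\<integral>\<^sup>+ x. ennreal ((t - x) powr (-k)) * indicator {0<..<t} x \<partial>lebesgue) \<le> ennreal (t powr (1-k) / (1-k))"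
proof -
  have "(\<integral>\<^sup>+ x. ennreal (x powr (-k)) * indicator {0<..<t} x \<partial>lebesgue)
     = ennreal \<bar>-1\<bar> * (\<integral>\<^sup>+ x. ennreal ((t + -1 * x) powr (-k)) * indicator {0<..<t} (t + -1 * x) \<partial>lebesgue)"
    by (rule nn_integral_real_affine_lebesgue) (auto intro!: borel_to_lebesgue)
  also have "(\<lambda>x. ennreal ((t + -1 * x) powr (-k)) * indicator {0<..<t} (t + -1 * x))
     = (\<lambda>x. ennreal ((t - x) powr (-k)) * indicator {0<..<t} x)"
    by (auto simp: indicator_def fun_eq_iff)
  finally show ?thesis using int_pow0[OF k t] by simp
qed

lemma int_powth:
  fixes k t h :: real assumes k: "0 \<le> k" "k < 1" and t: "0 < t"
  shows "(\<integral>\<^sup>+ x. ennreal ((t - (x + h)) powr (-k)) * indicator {0<..<t} (x + h) \<partial>lebesgue) \<le> ennreal (t powr (1-k) / (1-k))"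
proof -
  have "(\<integral>\<^sup>+ x. ennreal ((t - x) powr (-k)) * indicator {0<..<t} x \<partial>lebesgue)
     = ennreal \<bar>1\<bar> * (\<integral>\<^sup>+ x. ennreal ((t - (h + 1 * x)) powr (-k)) * indicator {0<..<t} (h + 1 * x) \<partial>lebesgue)"
    by (rule nn_integral_real_affine_lebesgue) (auto intro!: borel_to_lebesgue)
  then show ?thesis using int_powt[OF k t] by (simp add: add.commute)
qed



lemma fin_norm_diff_meas:
  fixes F G :: "real \<Rightarrow> 'a::real_normed_vector"
  assumes F: "F \<in> borel_measurable lebesgue" and G: "G \<in> borel_measurable lebesgue"
    and fin: "finite (range F)"
  shows "(\<lambda>s. norm (F s - G s)) \<in> borel_measurable lebesgue"
proof -
  have f: "(\<lambda>s. norm (a - G s)) \<in> borel_measurable lebesgue" for a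
  proof -
    have "(\<lambda>y. norm (a - y)) \<in> borel_measurable borel"
      by (intro borel_measurable_continuous_onI continuous_intros)
    from measurable_compose[OF G this] show ?thesis by (simp add: o_def)
  qed
  have g: "F \<in> lebesgue \<rightarrow>\<^sub>M count_space (range F)"
  proof (subst measurable_count_space_eq2[OF fin], intro conjI ballI)
    fix a assume "a \<in> range F"
    show "F -` {a} \<inter> space lebesgue \<in> sets lebesgue"
      by (rule measurable_sets[OF F]) simp
  qed auto
  show ?thesis
    by (rule measurable_compose_countable'[where f="\<lambda>a s. norm (a - G s)" and I="range F", OF f g])
       (use fin in \<open>auto intro: countable_finite\<close>)
qed

lemma transl_meas: "(\<lambda>s::real. s + h) \<in> lebesgue \<rightarrow>\<^sub>M lebesgue"
  using lebesgue_affine_measurable[where c="\<lambda>_::real. 1" and t=h] by (simp add: add.commute)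

lemma sm_repr:
  fixes \<Phi> :: "real \<Rightarrow> 'a::banach"
  assumes "strongly_measurable_on {0<..<T} \<Phi>"
  obtains \<Psi> N where "N \<in> null_sets lebesgue" "\<And>s. s \<in> {0<..<T} \<Longrightarrow> s \<notin> N \<Longrightarrow> \<Psi> s = \<Phi> s"
    "\<And>h. (\<lambda>s. norm (\<Psi> (s + h) - \<Psi> s)) \<in> borel_measurable lebesgue"
proof -
  from assms obtain g :: "nat \<Rightarrow> real \<Rightarrow> 'a" where
    g: "\<And>n. g n \<in> borel_measurable lebesgue" "\<And>n. finite (range (g n))"
    and ae: "AE s in lebesgue. s \<in> {0<..<T} \<longrightarrow> (\<lambda>n. g n s) \<longlonglongrightarrow> \<Phi> s"
    unfolding strongly_measurable_on_def by blast
  from ae obtain N where N: "{s \<in> space lebesgue. \<not> (s \<in> {0<..<T} \<longrightarrow> (\<lambda>n. g n s) \<longlonglongrightarrow> \<Phi> s)} \<subseteq> N"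
    "emeasure lebesgue N = 0" "N \<in> sets lebesgue"
    by (rule AE_E)
  have Nnull: "N \<in> null_sets lebesgue" using N by (simp add: null_sets_def)
  define S0 where "S0 = {0<..<T} - N"
  have "{0<..<T} \<in> sets lebesgue" by simp
  then have S0: "S0 \<in> sets lebesgue" using N(3) unfolding S0_def by (rule sets.Diff)
  define gg where "gg n s = (if s \<in> S0 then g n s else 0)" for n s
  define \<Psi> where "\<Psi> s = (if s \<in> S0 then \<Phi> s else 0)" for s
  have ggm: "gg n \<in> borel_measurable lebesgue" for n
    unfolding gg_def by (rule measurable_If_set[OF g(1)]) (use S0 in auto)
  have ggf: "finite (range (gg n))" for n
    by (rule finite_subset[of _ "insert 0 (range (g n))"]) (use g(2) in \<open>auto simp: gg_def\<close>)
  have lim: "(\<lambda>n. gg n s) \<longlonglongrightarrow> \<Psi> s" for s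
  proof (cases "s \<in> S0")
    case True then have "(\<lambda>n. g n s) \<longlonglongrightarrow> \<Phi> s" using N(1) by (auto simp: S0_def)
    then show ?thesis using True by (simp add: gg_def \<Psi>_def)
  next
    case False then show ?thesis by (simp add: gg_def \<Psi>_def)
  qed
  have meas: "(\<lambda>s. norm (\<Psi> (s + h) - \<Psi> s)) \<in> borel_measurable lebesgue" for h
  proof (rule borel_measurable_LIMSEQ_real)
    fix s show "(\<lambda>n. norm (gg n (s + h) - gg n s)) \<longlonglongrightarrow> norm (\<Psi> (s + h) - \<Psi> s)"
      by (intro tendsto_norm tendsto_diff lim)
  next
    fix n
    have F: "(\<lambda>s. gg n (s + h)) \<in> borel_measurable lebesgue"
      using measurable_compose[OF transl_meas ggm] by (simp add: o_def)
    have "finite (range (\<lambda>s. gg n (s + h)))"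
      by (rule finite_subset[OF _ ggf[of n]]) auto
    then show "(\<lambda>s. norm (gg n (s + h) - gg n s)) \<in> borel_measurable lebesgue"
      using fin_norm_diff_meas[OF F ggm] by blast
  qed
  show ?thesis
    by (rule that[OF Nnull _ meas]) (auto simp: \<Psi>_def S0_def)
qed



lemma linf_ae:
  fixes \<Phi> :: "real \<Rightarrow> 'a::real_normed_vector"
  assumes "Linf_norm J \<Phi> \<noteq> top"
  shows "AE s in lebesgue. s \<in> J \<longrightarrow> norm (\<Phi> s) \<le> enn2real (Linf_norm J \<Phi>)"
proof -
  define M where "M = Linf_norm J \<Phi>"
  define m where "m = enn2real M"
  have M: "M = ennreal m" "0 \<le> m" using assms by (auto simp: M_def m_def top.not_eq_extremum intro: ennreal_enn2real[symmetric])
  have hn: "AE s in lebesgue. s \<in> J \<longrightarrow> norm (\<Phi> s) \<le> m + 1 / Suc n" for n :: nat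
  proof -
    have "M < ennreal (m + 1 / Suc n)" using M by (simp add: ennreal_lessI)
    then obtain C where C: "AE s in lebesgue. s \<in> J \<longrightarrow> ennreal (norm (\<Phi> s)) \<le> C"
      "C < ennreal (m + 1 / Suc n)"
      unfolding M_def Linf_norm_def by (auto simp: Inf_less_iff)
    from C(1) show ?thesis
    proof eventually_elim
      case (elim s)
      show ?case
      proof
        assume "s \<in> J"
        then have "ennreal (norm (\<Phi> s)) \<le> ennreal (m + 1 / Suc n)" using elim C(2) by auto
        then show "norm (\<Phi> s) \<le> m + 1 / Suc n" using M by (subst (asm) ennreal_le_iff) auto
      qed
    qed
  qed
  have "AE s in lebesgue. \<forall>n::nat. s \<in> J \<longrightarrow> norm (\<Phi> s) \<le> m + 1 / Suc n"
    by (rule AE_all_countable[THEN iffD2]) (use hn in blast)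
  then show ?thesis unfolding m_def[symmetric] M_def[symmetric]
  proof eventually_elim
    case (elim s)
    show ?case
    proof
      assume sJ: "s \<in> J"
      show "norm (\<Phi> s) \<le> m"
      proof (rule ccontr)
        assume "\<not> norm (\<Phi> s) \<le> m"
        then have "0 < norm (\<Phi> s) - m" by simp
        then obtain n :: nat where "inverse (real (Suc n)) < norm (\<Phi> s) - m"
          using reals_Archimedean by blast
        moreover have "norm (\<Phi> s) \<le> m + 1 / Suc n" using elim sJ by blast
        ultimately show False by (simp add: inverse_eq_divide)
      qed
    qed
  qed
qed

lemma null_transl:
  fixes N :: "real set" assumes "N \<in> null_sets lebesgue"
  shows "AE s in lebesgue. s + h \<notin> N"
proof -
  have "negligible N" using assms by (simp add: negligible_iff_null_sets)
  then have "negligible ((+) (-h) ` N)" by (rule negligible_translation)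
  then have "(+) (-h) ` N \<in> null_sets lebesgue" by (simp add: negligible_iff_null_sets)
  then have "AE s in lebesgue. s \<notin> (+) (-h) ` N" by (rule AE_not_in)
  then show ?thesis
  proof eventually_elim
    case (elim s)
    show ?case
    proof
      assume "s + h \<in> N"
      then have "s \<in> (+) (-h) ` N" by (auto intro!: image_eqI[where x="s+h"])
      with elim show False by simp
    qed
  qed
qed

lemma div_by_1_le: fixes x r :: real assumes "0 \<le> x" "1 \<le> r" shows "x / r \<le> x"
  using assms by (simp add: divide_le_eq mult_le_cancel_left1 order.trans[OF _ mult_left_mono[of 1 r x]])

lemma young_pt:
  fixes V U l r r' :: real
  assumes "0 \<le> V" "0 \<le> U" "0 < l" "r > 1" "r' > 1" "1/r + 1/r' = 1"
  shows "V * U \<le> l powr r * V powr r + l powr (-r') * U powr r'"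
proof -
  have "(l * V) * (U / l) \<le> (l * V) powr r / r + (U / l) powr r' / r'"
    using assms by (intro Youngs_inequality) auto
  also have "(l * V) powr r / r \<le> (l * V) powr r" using assms by (intro div_by_1_le) auto
  also have "(U / l) powr r' / r' \<le> (U / l) powr r'" using assms by (intro div_by_1_le) auto
  also have "(l * V) powr r = l powr r * V powr r" using assms by (simp add: powr_mult)
  also have "(U / l) powr r' = l powr (-r') * U powr r'"
  proof -
    have "(U / l) powr r' = U powr r' / l powr r'" using assms by (simp add: powr_divide)
    then show ?thesis by (simp add: powr_minus divide_inverse mult.commute)
  qed
  finally show ?thesis using assms by simp
qed



lemma main_h:
  fixes \<Phi> \<Psi> :: "real \<Rightarrow> 'a::banach" and t T0 h a g p q m r r' :: real
  assumes t: "0 < t" "t \<le> T0"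
    and a: "0 \<le> a" "a \<le> 1" and g: "0 \<le> g" "g \<le> 1" and p: "1 \<le> p"
    and k: "(a+g)*p < 1"
    and r: "r > 1" "r' > 1" "1/r + 1/r' = 1" "p * r' = q" "a*p*r < 1"
    and m: "0 \<le> m" "AE s in lebesgue. s \<in> {0<..<T0} \<longrightarrow> norm (\<Phi> s) \<le> m"
    and N: "N \<in> null_sets lebesgue" "\<And>s. s \<in> {0<..<T0} \<Longrightarrow> s \<notin> N \<Longrightarrow> \<Psi> s = \<Phi> s"
    and meas[measurable]: "(\<lambda>s. norm (\<Psi> (s + h) - \<Psi> s)) \<in> borel_measurable lebesgue"
  shows "(\<integral>\<^sup>+ s\<in>{0<..<t}. ennreal (norm (transl {0<..<t} h (\<lambda>s. (t - s) powr (- a) *\<^sub>R \<Phi> s) s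
              - (t - s) powr (- a) *\<^sub>R \<Phi> s) powr p) \<partial>lebesgue)
   \<le> ennreal (2 powr p * (2 * (t powr (1 - a*p*r) / (1 - a*p*r)) powr (1/r)))
        * enn_powr (\<integral>\<^sup>+ s\<in>{0<..<T0}. ennreal (norm (transl {0<..<T0} h \<Phi> s - \<Phi> s) powr q) \<partial>lebesgue) (1/r')
     + ennreal (2 powr p * (m powr p * \<bar>h\<bar> powr (g*p)) * (3 * (t powr (1-(a+g)*p) / (1-(a+g)*p))))"
proof -
  define I where "I = {0<..<t}"
  define J where "J = {0<..<T0}"
  have IJ: "I \<subseteq> J" using t by (auto simp: I_def J_def)
  define k where "k = (a+g)*p"
  have k0: "0 \<le> k" "k < 1" using a g p k by (auto simp: k_def)
  define c where "c = m powr p * \<bar>h\<bar> powr (g*p)"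
  have c0: "0 \<le> c" by (simp add: c_def)
  define V where "V s = (if s + h \<in> I then (t-(s+h)) powr (-a*p) else 0) * indicator I s" for s
  define U where "U s = (if s + h \<in> I then norm (\<Psi> (s+h) - \<Psi> s) powr p else 0) * indicator I s" for s
  define V2 where "V2 s = ((t-s) powr (-k) + s powr (-k) + (if s + h \<in> I then (t-(s+h)) powr (-k) else 0)) * indicator I s" for s
  define X where "X = (\<integral>\<^sup>+ s\<in>J. ennreal (norm (transl J h \<Phi> s - \<Phi> s) powr q) \<partial>lebesgue)"
  define Wc where "Wc = t powr (1 - a*p*r) / (1 - a*p*r)"
  have Wc: "Wc > 0" using t r by (simp add: Wc_def)
  have V0: "0 \<le> V s" "0 \<le> U s" "0 \<le> V2 s" for s by (auto simp: V_def U_def V2_def)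
  have Im: "I \<in> sets borel" by (simp add: I_def)
  have Vm[measurable]: "V \<in> borel_measurable lebesgue"
    unfolding V_def I_def by (intro borel_to_lebesgue) measurable
  have V2m[measurable]: "V2 \<in> borel_measurable lebesgue"
    unfolding V2_def I_def by (intro borel_to_lebesgue) measurable
  have Um[measurable]: "U \<in> borel_measurable lebesgue"
  proof -
    have F: "(\<lambda>s. norm (\<Psi> (s + h) - \<Psi> s) powr p) \<in> borel_measurable lebesgue"
      by (rule powr_real_measurable[OF meas]) simp
    have Ind: "(\<lambda>s. indicator I (s+h) * indicator I s :: real) \<in> borel_measurable lebesgue"
      unfolding I_def by (intro borel_to_lebesgue) measurable
    have "U = (\<lambda>s. norm (\<Psi> (s + h) - \<Psi> s) powr p * (indicator I (s+h) * indicator I s))"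
      by (auto simp: U_def fun_eq_iff indicator_def)
    then show ?thesis using borel_measurable_times[OF F Ind] by simp
  qed
  have AEgood: "AE s in lebesgue. s \<notin> N \<and> s + h \<notin> N \<and> (s \<in> J \<longrightarrow> norm (\<Phi> s) \<le> m)"
    using AE_not_in[OF N(1)] null_transl[OF N(1), of h] m(2) unfolding J_def by eventually_elim auto
  have step1: "(\<integral>\<^sup>+ s\<in>I. ennreal (norm (transl I h (\<lambda>s. (t - s) powr (- a) *\<^sub>R \<Phi> s) s
              - (t - s) powr (- a) *\<^sub>R \<Phi> s) powr p) \<partial>lebesgue)
     \<le> (\<integral>\<^sup>+ s. ennreal (2 powr p) * (ennreal (V s * U s) + ennreal c * ennreal (V2 s)) \<partial>lebesgue)"
  proof (rule nn_integral_mono_AE)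
    show "AE s in lebesgue. ennreal (norm (transl I h (\<lambda>s. (t - s) powr (- a) *\<^sub>R \<Phi> s) s
              - (t - s) powr (- a) *\<^sub>R \<Phi> s) powr p) * indicator I s
       \<le> ennreal (2 powr p) * (ennreal (V s * U s) + ennreal c * ennreal (V2 s))"
      using AEgood
    proof eventually_elim
      case (elim s)
      show ?case
      proof (cases "s \<in> I")
        case False then show ?thesis by simp
      next
        case sI: True
        have s: "0 < s" "s < t" using sI by (auto simp: I_def)
        have nm: "norm (\<Phi> s) \<le> m" using elim sI IJ by auto
        note pw = pointwise[OF s a g _ nm, where h=h and ?\<phi>1.0="\<Phi> (s+h)" and p=p, folded I_def]
        have eqD: "transl I h (\<lambda>s. (t - s) powr (- a) *\<^sub>R \<Phi> s) s
           = (if s + h \<in> I then (t-(s+h)) powr (-a) *\<^sub>R \<Phi> (s+h) else 0)"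
          by (simp add: transl_def)
        have eqU: "(if s + h \<in> I then (t-(s+h)) powr (-a*p) * norm (\<Phi> (s+h) - \<Phi> s) powr p else 0)
            = V s * U s"
        proof (cases "s + h \<in> I")
          case True
          have "\<Psi> s = \<Phi> s" "\<Psi> (s+h) = \<Phi> (s+h)" using N(2) elim sI True IJ by (auto simp: J_def)
          then show ?thesis using True sI by (simp add: V_def U_def)
        next
          case False then show ?thesis using sI by (simp add: V_def U_def)
        qed
        have eqV: "((t-s) powr (-((a+g)*p)) + s powr (-((a+g)*p))
          + (if s + h \<in> I then (t-(s+h)) powr (-((a+g)*p)) else 0)) = V2 s"
          using sI by (simp add: V2_def k_def)
        note pw2 = pw[unfolded eqU eqV]
        have "norm (transl I h (\<lambda>s. (t - s) powr (- a) *\<^sub>R \<Phi> s) s - (t - s) powr (- a) *\<^sub>R \<Phi> s) powr p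
            = norm ((if s + h \<in> I then (t-(s+h)) powr (-a) *\<^sub>R \<Phi> (s+h) else 0) - (t - s) powr (- a) *\<^sub>R \<Phi> s) powr p"
          by (simp only: eqD)
        also have "\<dots> \<le> 2 powr p * (V s * U s + c * V2 s)"
          unfolding c_def using p by (intro pw2) auto
        finally have rl: "norm (transl I h (\<lambda>s. (t - s) powr (- a) *\<^sub>R \<Phi> s) s - (t - s) powr (- a) *\<^sub>R \<Phi> s) powr p
            \<le> 2 powr p * (V s * U s + c * V2 s)" .
        have eqR: "ennreal (2 powr p) * (ennreal (V s * U s) + ennreal c * ennreal (V2 s))
            = ennreal (2 powr p * (V s * U s + c * V2 s))"
          using V0[of s] c0 by (simp add: ennreal_mult ennreal_plus)
        show ?thesis using sI unfolding eqR using rl by (simp add: ennreal_leI)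
      qed
    qed
  qed
  have step2: "(\<integral>\<^sup>+ s. ennreal (2 powr p) * (ennreal (V s * U s) + ennreal c * ennreal (V2 s)) \<partial>lebesgue)
     = ennreal (2 powr p) * ((\<integral>\<^sup>+ s. ennreal (V s * U s) \<partial>lebesgue) + ennreal c * (\<integral>\<^sup>+ s. ennreal (V2 s) \<partial>lebesgue))"
    by (simp add: nn_integral_cmult nn_integral_add)
  have step3: "(\<integral>\<^sup>+ s. ennreal (V2 s) \<partial>lebesgue) \<le> ennreal (3 * (t powr (1-k) / (1-k)))"
  proof -
    have "(\<integral>\<^sup>+ s. ennreal (V2 s) \<partial>lebesgue) \<le> (\<integral>\<^sup>+ s. ennreal ((t - s) powr (-k)) * indicator {0<..<t} s
        + ennreal (s powr (-k)) * indicator {0<..<t} s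
        + ennreal ((t - (s + h)) powr (-k)) * indicator {0<..<t} (s + h) \<partial>lebesgue)"
      by (intro nn_integral_mono) (auto simp: V2_def I_def indicator_def ennreal_plus)
    also have "\<dots> = (\<integral>\<^sup>+ s. ennreal ((t - s) powr (-k)) * indicator {0<..<t} s \<partial>lebesgue)
        + (\<integral>\<^sup>+ s. ennreal (s powr (-k)) * indicator {0<..<t} s \<partial>lebesgue)
        + (\<integral>\<^sup>+ s. ennreal ((t - (s + h)) powr (-k)) * indicator {0<..<t} (s + h) \<partial>lebesgue)"
      by (subst nn_integral_add; (intro borel_to_lebesgue)?; simp?; subst nn_integral_add; simp?; (intro borel_to_lebesgue)?; simp)
    also have "\<dots> \<le> ennreal (t powr (1-k) / (1-k)) + ennreal (t powr (1-k) / (1-k)) + ennreal (t powr (1-k) / (1-k))"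
      by (intro add_mono int_powt int_pow0 int_powth k0 t)
    also have "\<dots> = ennreal (3 * (t powr (1-k) / (1-k)))"
      using k0 t by (simp add: ennreal_plus[symmetric] del: ennreal_plus)
    finally show ?thesis .
  qed
  have intV: "(\<integral>\<^sup>+ s. ennreal (V s powr r) \<partial>lebesgue) \<le> ennreal Wc"
  proof -
    have "(\<integral>\<^sup>+ s. ennreal (V s powr r) \<partial>lebesgue)
        \<le> (\<integral>\<^sup>+ s. ennreal ((t - (s + h)) powr (-(a*p*r))) * indicator {0<..<t} (s + h) \<partial>lebesgue)"
      by (intro nn_integral_mono) (auto simp: V_def I_def indicator_def powr_powr)
    also have "\<dots> \<le> ennreal Wc" unfolding Wc_def
      by (rule int_powth) (use a p r t in auto)
    finally show ?thesis .
  qed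
  have intU: "(\<integral>\<^sup>+ s. ennreal (U s powr r') \<partial>lebesgue) \<le> X"
    unfolding X_def
  proof (rule nn_integral_mono_AE)
    show "AE s in lebesgue. ennreal (U s powr r') \<le> ennreal (norm (transl J h \<Phi> s - \<Phi> s) powr q) * indicator J s"
      using AEgood
    proof eventually_elim
      case (elim s)
      show ?case
      proof (cases "s \<in> I \<and> s + h \<in> I")
        case True
        then have "\<Psi> s = \<Phi> s" "\<Psi> (s+h) = \<Phi> (s+h)" "s \<in> J" "s + h \<in> J" using N(2) elim IJ by (auto simp: J_def)
        then show ?thesis using True r(4) by (simp add: U_def transl_def powr_powr)
      next
        case False then show ?thesis by (auto simp: U_def)
      qed
    qed
  qed
  have step4: "(\<integral>\<^sup>+ s. ennreal (V s * U s) \<partial>lebesgue) \<le> ennreal (2 * Wc powr (1/r)) * enn_powr X (1/r')"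
  proof (rule young_opt[OF Wc r(1,2,3)])
    fix l :: real assume l: "0 < l"
    have "(\<integral>\<^sup>+ s. ennreal (V s * U s) \<partial>lebesgue)
        \<le> (\<integral>\<^sup>+ s. ennreal (l powr r) * ennreal (V s powr r) + ennreal (l powr (-r')) * ennreal (U s powr r') \<partial>lebesgue)"
    proof (intro nn_integral_mono)
      fix s
      have "V s * U s \<le> l powr r * V s powr r + l powr (-r') * U s powr r'"
        using young_pt[OF V0(1) V0(2) l r(1,2,3)] .
      then show "ennreal (V s * U s) \<le> ennreal (l powr r) * ennreal (V s powr r) + ennreal (l powr (-r')) * ennreal (U s powr r')"
        by (simp add: ennreal_mult[symmetric] ennreal_plus[symmetric] ennreal_leI del: ennreal_plus)
    qed
    also have "\<dots> = ennreal (l powr r) * (\<integral>\<^sup>+ s. ennreal (V s powr r) \<partial>lebesgue)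
        + ennreal (l powr (-r')) * (\<integral>\<^sup>+ s. ennreal (U s powr r') \<partial>lebesgue)"
      by (simp add: nn_integral_cmult nn_integral_add)
    also have "\<dots> \<le> ennreal (l powr r) * ennreal Wc + ennreal (l powr (-r')) * X"
      by (intro add_mono mult_left_mono intV intU) auto
    also have "\<dots> = ennreal (l powr r * Wc) + ennreal (l powr (-r')) * X"
      using Wc by (simp add: ennreal_mult)
    finally show "(\<integral>\<^sup>+ s. ennreal (V s * U s) \<partial>lebesgue) \<le> ennreal (l powr r * Wc) + ennreal (l powr (-r')) * X" .
  qed
  have fin: "ennreal (2 powr p) * ((\<integral>\<^sup>+ s. ennreal (V s * U s) \<partial>lebesgue) + ennreal c * (\<integral>\<^sup>+ s. ennreal (V2 s) \<partial>lebesgue))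
     \<le> ennreal (2 powr p) * (ennreal (2 * Wc powr (1/r)) * enn_powr X (1/r') + ennreal c * ennreal (3 * (t powr (1-k) / (1-k))))"
    by (intro mult_left_mono add_mono step4 step3) auto
  also have "\<dots> = ennreal (2 powr p * (2 * Wc powr (1/r))) * enn_powr X (1/r') + ennreal (2 powr p * c * (3 * (t powr (1-k) / (1-k))))"
  proof -
    define Q where "Q = 3 * (t powr (1-k) / (1-k))"
    have Q: "0 \<le> Q" using k0 t by (simp add: Q_def)
    define E where "E = enn_powr X (1/r')"
    have W2: "0 \<le> 2 * Wc powr (1/r)" by simp
    have "ennreal (2 powr p) * (ennreal (2 * Wc powr (1/r)) * E + ennreal c * ennreal Q)
       = ennreal (2 powr p) * ennreal (2 * Wc powr (1/r)) * E + ennreal (2 powr p) * ennreal c * ennreal Q"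
      by (simp add: distrib_left mult.assoc)
    also have "\<dots> = ennreal (2 powr p * (2 * Wc powr (1/r))) * E + ennreal (2 powr p * c * Q)"
      using W2 c0 Q by (simp add: ennreal_mult)
    finally show ?thesis unfolding Q_def E_def .
  qed
  finally have "(\<integral>\<^sup>+ s\<in>I. ennreal (norm (transl I h (\<lambda>s. (t - s) powr (- a) *\<^sub>R \<Phi> s) s
              - (t - s) powr (- a) *\<^sub>R \<Phi> s) powr p) \<partial>lebesgue)
     \<le> ennreal (2 powr p * (2 * Wc powr (1/r))) * enn_powr X (1/r') + ennreal (2 powr p * c * (3 * (t powr (1-k) / (1-k))))"
    using step1 step2 by simp
  then show ?thesis unfolding I_def J_def X_def Wc_def c_def k_def .
qed



lemma upclosed_borel:
  fixes S :: "real set"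
  assumes up: "\<And>x z. x \<in> S \<Longrightarrow> x \<le> z \<Longrightarrow> z \<in> S"
  shows "S \<in> sets borel"
proof (cases "S = {} \<or> S = UNIV")
  case True then show ?thesis by auto
next
  case False
  then obtain z w where z: "z \<notin> S" and w: "w \<in> S" by auto
  have lb: "z \<le> x" if "x \<in> S" for x
    using up[OF that, of z] z by (cases "x \<le> z") auto
  have bdd: "bdd_below S" unfolding bdd_below_def using lb by blast
  define c where "c = Inf S"
  have A: "x \<in> S" if "c < x" for x
  proof -
    have "Inf S < x" using that by (simp add: c_def)
    then obtain s where "s \<in> S" "s < x" using cInf_less_iff[of S x] w bdd by auto
    then show "x \<in> S" using up by auto
  qed
  have B: "c \<le> x" if "x \<in> S" for x using cInf_lower[OF that bdd] by (simp add: c_def)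
  have "S = {c<..} \<union> (S \<inter> {c})"
    using A B by (auto simp: less_le)
  moreover have "S \<inter> {c} \<in> sets borel"
    by (cases "c \<in> S") (auto simp: Int_absorb1 )
  ultimately show ?thesis by (metis borel_open open_greaterThan sets.Un)
qed

lemma mono_ennreal_measurable:
  fixes G :: "real \<Rightarrow> ennreal" assumes "mono G"
  shows "G \<in> borel_measurable borel"
proof (rule borel_measurableI_greater)
  fix y
  have "{x. y < G x} \<in> sets borel"
    by (rule upclosed_borel) (use assms in \<open>auto dest: monoD intro: less_le_trans\<close>)
  then show "{x \<in> space borel. y < G x} \<in> sets borel" by simp
qed

lemma enn_powr_one[simp]: "enn_powr x 1 = x"
  by (cases x) (auto simp: enn_powr_def)

lemma tpow:
  fixes t T0 T e d c eps :: real
  assumes "0 < t" "t \<le> T0" "T0 \<le> T" "0 < eps" "eps \<le> e * d" "0 \<le> c" "0 < d"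
  shows "(c * t powr e) powr d \<le> (c powr d * T powr (e*d - eps)) * T0 powr eps"
proof -
  have "(c * t powr e) powr d = c powr d * t powr (e*d)" using assms by (simp add: powr_mult powr_powr)
  also have "t powr (e*d) \<le> T0 powr (e*d)" using assms by (intro powr_mono2) auto
  also have "T0 powr (e*d) = T0 powr (e*d - eps) * T0 powr eps" using assms by (simp add: powr_add[symmetric])
  also have "T0 powr (e*d - eps) \<le> T powr (e*d - eps)" using assms by (intro powr_mono2) auto
  finally show ?thesis using assms by (simp add: mult_left_mono mult.assoc)
qed



lemma main_t:
  fixes \<Phi> \<Psi> :: "real \<Rightarrow> 'a::banach" and t T0 a g p q m r r' :: real
  assumes t: "0 < t" "t \<le> T0"
    and a: "0 \<le> a" "a \<le> 1" and g: "0 \<le> g" "g \<le> 1" and p: "1 \<le> p"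
    and k: "(a+g)*p < 1"
    and r: "r > 1" "r' > 1" "1/r + 1/r' = 1" "p * r' = q" "a*p*r < 1"
    and gs: "1/p - 1/2 < g"
    and m: "0 \<le> m" "AE s in lebesgue. s \<in> {0<..<T0} \<longrightarrow> norm (\<Phi> s) \<le> m"
    and N: "N \<in> null_sets lebesgue" "\<And>s. s \<in> {0<..<T0} \<Longrightarrow> s \<notin> N \<Longrightarrow> \<Psi> s = \<Phi> s"
    and meas: "\<And>h. (\<lambda>s. norm (\<Psi> (s + h) - \<Psi> s)) \<in> borel_measurable lebesgue"
  shows "besov_norm p p (1/p - 1/2) {0<..<t} (\<lambda>s. (t - s) powr (- a) *\<^sub>R \<Phi> s)
    \<le> ennreal (m * (t powr (1-a*p)/(1-a*p)) powr (1/p))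
     + ennreal ((2 powr p * (2 * (t powr (1 - a*p*r) / (1 - a*p*r)) powr (1/r))) powr (1/p))
        * enn_powr (\<integral>\<^sup>+ \<rho>\<in>{0<..<1}. ennreal (\<rho> powr (- (1/p - 1/2) * p) / \<rho>) *
             enn_powr (SUP h\<in>{h. \<bar>h\<bar> < \<rho>}. Lq_norm q {0<..<T0} (\<lambda>s. transl {0<..<T0} h \<Phi> s - \<Phi> s)) p \<partial>lborel) (1/p)
     + ennreal (m * (2 powr p * (3 * (t powr (1-(a+g)*p) / (1-(a+g)*p))) / ((g - (1/p - 1/2)) * p)) powr (1/p))"
proof -
  define I where "I = {0<..<t}"
  define J where "J = {0<..<T0}"
  define f where "f = (\<lambda>s. (t - s) powr (- a) *\<^sub>R \<Phi> s)"
  define s0 where "s0 = 1/p - 1/2"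
  define b where "b = (g - s0) * p"
  have b: "0 < b" using gs p by (simp add: b_def s0_def)
  have ap: "a * p < 1"
  proof -
    have "a * p * 1 \<le> a * p * r" using a p r by (intro mult_left_mono) auto
    then show ?thesis using r by simp
  qed
  define Q1 where "Q1 = t powr (1-a*p)/(1-a*p)"
  define Q3 where "Q3 = t powr (1-(a+g)*p)/(1-(a+g)*p)"
  define Wc where "Wc = t powr (1 - a*p*r) / (1 - a*p*r)"
  define CA where "CA = 2 powr p * (2 * Wc powr (1/r))"
  define CB where "CB = 2 powr p * m powr p * (3 * Q3)"
  have Q1: "0 \<le> Q1" using ap t by (simp add: Q1_def)
  have Q3: "0 \<le> Q3" using k t by (simp add: Q3_def)
  have CA: "0 \<le> CA" by (simp add: CA_def)
  have CB: "0 \<le> CB" using Q3 by (simp add: CB_def)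
  define W where "W \<rho> = ennreal (\<rho> powr (- s0 * p) / \<rho>)" for \<rho> :: real
  define GJ where "GJ \<rho> = enn_powr (SUP h\<in>{h. \<bar>h\<bar> < \<rho>}. Lq_norm q J (\<lambda>s. transl J h \<Phi> s - \<Phi> s)) p" for \<rho> :: real
  define GI where "GI \<rho> = enn_powr (SUP h\<in>{h. \<bar>h\<bar> < \<rho>}. Lq_norm p I (\<lambda>s. transl I h f s - f s)) p" for \<rho> :: real
  define Bd where "Bd = (\<integral>\<^sup>+ \<rho>\<in>{0<..<1}. W \<rho> * GJ \<rho> \<partial>lborel)"
  have partA: "Lq_norm p I f \<le> ennreal (m * Q1 powr (1/p))"
  proof -
    have "(\<integral>\<^sup>+ s\<in>I. ennreal (norm (f s) powr p) \<partial>lebesgue)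
        \<le> (\<integral>\<^sup>+ s. ennreal (m powr p) * (ennreal ((t - s) powr (-(a*p))) * indicator {0<..<t} s) \<partial>lebesgue)"
    proof (rule nn_integral_mono_AE)
      show "AE s in lebesgue. ennreal (norm (f s) powr p) * indicator I s
          \<le> ennreal (m powr p) * (ennreal ((t - s) powr (-(a*p))) * indicator {0<..<t} s)"
        using m(2)
      proof eventually_elim
        case (elim s)
        show ?case
        proof (cases "s \<in> I")
          case True
          then have "norm (\<Phi> s) \<le> m" using elim t by (auto simp: I_def)
          then have "norm (f s) powr p \<le> ((t - s) powr (-a) * m) powr p"
            using p by (auto simp: f_def intro!: powr_mono2 mult_left_mono)
          also have "\<dots> = m powr p * (t - s) powr (-(a*p))"
            using m by (simp add: powr_mult powr_powr mult.commute)
          finally show ?thesis using True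
            by (simp add: I_def ennreal_mult[symmetric] ennreal_leI del: ennreal_mult)
        next
          case False then show ?thesis by (simp add: I_def)
        qed
      qed
    qed
    also have "\<dots> = ennreal (m powr p) * (\<integral>\<^sup>+ s. ennreal ((t - s) powr (-(a*p))) * indicator {0<..<t} s \<partial>lebesgue)"
      by (rule nn_integral_cmult) (intro borel_to_lebesgue, simp)
    also have "\<dots> \<le> ennreal (m powr p) * ennreal Q1"
      unfolding Q1_def by (intro mult_left_mono int_powt) (use ap a p t in auto)
    also have "\<dots> = ennreal (m powr p * Q1)" using Q1 by (simp add: ennreal_mult)
    finally have "Lq_norm p I f \<le> enn_powr (ennreal (m powr p * Q1)) (1/p)"
      unfolding Lq_norm_def using p by (intro enn_powr_mono) auto
    also have "\<dots> = ennreal (m * Q1 powr (1/p))"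
      using m Q1 p by (simp add: enn_powr_ennreal powr_mult powr_powr)
    finally show ?thesis .
  qed
  have partB: "GI \<rho> \<le> ennreal CA * GJ \<rho> + ennreal (CB * \<rho> powr (g*p))" if \<rho>: "0 < \<rho>" for \<rho>
  proof -
    define Z where "Z = ennreal CA * GJ \<rho> + ennreal (CB * \<rho> powr (g*p))"
    have "(SUP h\<in>{h. \<bar>h\<bar> < \<rho>}. Lq_norm p I (\<lambda>s. transl I h f s - f s)) \<le> enn_powr Z (1/p)"
    proof (rule SUP_least)
      fix h assume h: "h \<in> {h. \<bar>h\<bar> < \<rho>}"
      define X where "X = (\<integral>\<^sup>+ s\<in>J. ennreal (norm (transl J h \<Phi> s - \<Phi> s) powr q) \<partial>lebesgue)"
      note mh = main_h[OF t a g p k r m N meas[of h]]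
      have eqX: "enn_powr X (1/r') = enn_powr (Lq_norm q J (\<lambda>s. transl J h \<Phi> s - \<Phi> s)) p"
      proof -
        have "q > 0" using r p by (auto simp flip: r(4))
        then have "enn_powr (Lq_norm q J (\<lambda>s. transl J h \<Phi> s - \<Phi> s)) p = enn_powr X (1/q * p)"
          unfolding Lq_norm_def X_def by (simp add: enn_powr_powr)
        moreover have "1/q * p = 1/r'" using r p by (auto simp flip: r(4))
        ultimately show ?thesis by simp
      qed
      have le1: "enn_powr X (1/r') \<le> GJ \<rho>"
        unfolding eqX GJ_def using h p by (intro enn_powr_mono SUP_upper) auto
      have le2: "2 powr p * (m powr p * \<bar>h\<bar> powr (g*p)) * (3 * Q3) \<le> CB * \<rho> powr (g*p)"
      proof -
        have "\<bar>h\<bar> powr (g*p) \<le> \<rho> powr (g*p)" using h g p by (intro powr_mono2) auto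
        moreover have "2 powr p * (m powr p * \<bar>h\<bar> powr (g*p)) * (3 * Q3) = CB * \<bar>h\<bar> powr (g*p)"
          by (simp add: CB_def algebra_simps)
        ultimately show ?thesis using CB by (metis mult_left_mono)
      qed
      have "(\<integral>\<^sup>+ s\<in>I. ennreal (norm (transl I h f s - f s) powr p) \<partial>lebesgue)
          \<le> ennreal CA * enn_powr X (1/r') + ennreal (2 powr p * (m powr p * \<bar>h\<bar> powr (g*p)) * (3 * Q3))"
        using mh unfolding I_def f_def CA_def Wc_def X_def J_def Q3_def .
      also have "\<dots> \<le> Z" unfolding Z_def using le1 le2 by (intro add_mono mult_left_mono ennreal_leI) auto
      finally show "Lq_norm p I (\<lambda>s. transl I h f s - f s) \<le> enn_powr Z (1/p)"
        unfolding Lq_norm_def using p by (intro enn_powr_mono) auto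
    qed
    then have "GI \<rho> \<le> enn_powr (enn_powr Z (1/p)) p" unfolding GI_def using p by (intro enn_powr_mono) auto
    also have "\<dots> = Z" using p by (simp add: enn_powr_powr)
    finally show ?thesis unfolding Z_def .
  qed
  have monoGJ: "mono GJ"
  proof (rule monoI)
    fix x y :: real assume "x \<le> y"
    then show "GJ x \<le> GJ y" unfolding GJ_def using p
      by (intro enn_powr_mono SUP_subset_mono) auto
  qed
  have GJm[measurable]: "GJ \<in> borel_measurable borel" by (rule mono_ennreal_measurable[OF monoGJ])
  have Wm[measurable]: "W \<in> borel_measurable borel" unfolding W_def by measurable
  have Wpow: "W \<rho> * ennreal (\<rho> powr (g*p)) = ennreal (\<rho> powr (b - 1))" if "0 < \<rho>" for \<rho>
  proof -
    have "\<rho> powr (- s0 * p) / \<rho> * \<rho> powr (g*p) = \<rho> powr (- s0 * p - 1 + g*p)"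
      using that by (simp add: powr_diff powr_add)
    also have "- s0 * p - 1 + g*p = b - 1" by (simp add: b_def algebra_simps)
    finally show ?thesis unfolding W_def using that by (simp add: ennreal_mult[symmetric] del: ennreal_mult)
  qed
  have partC: "(\<integral>\<^sup>+ \<rho>\<in>{0<..<1}. W \<rho> * GI \<rho> \<partial>lborel) \<le> ennreal CA * Bd + ennreal CB * ennreal (1/b)"
  proof -
    have "(\<integral>\<^sup>+ \<rho>\<in>{0<..<1}. W \<rho> * GI \<rho> \<partial>lborel)
       \<le> (\<integral>\<^sup>+ \<rho>. ennreal CA * (W \<rho> * GJ \<rho> * indicator {0<..<1} \<rho>)
           + ennreal CB * (ennreal (\<rho> powr (b - 1)) * indicator {0<..<1} \<rho>) \<partial>lborel)"
    proof (intro nn_integral_mono)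
      fix \<rho> :: real
      show "W \<rho> * GI \<rho> * indicator {0<..<1} \<rho> \<le> ennreal CA * (W \<rho> * GJ \<rho> * indicator {0<..<1} \<rho>)
           + ennreal CB * (ennreal (\<rho> powr (b - 1)) * indicator {0<..<1} \<rho>)"
      proof (cases "\<rho> \<in> {0<..<1}")
        case True
        then have r0: "0 < \<rho>" by simp
        have "W \<rho> * GI \<rho> \<le> W \<rho> * (ennreal CA * GJ \<rho> + ennreal (CB * \<rho> powr (g*p)))"
          by (intro mult_left_mono partB[OF r0]) auto
        also have "\<dots> = ennreal CA * (W \<rho> * GJ \<rho>) + ennreal CB * (W \<rho> * ennreal (\<rho> powr (g*p)))"
          using CB by (simp add: distrib_left ennreal_mult mult.assoc mult.left_commute)
        also have "\<dots> = ennreal CA * (W \<rho> * GJ \<rho>) + ennreal CB * ennreal (\<rho> powr (b - 1))"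
          using Wpow[OF r0] by simp
        finally show ?thesis using True by simp
      qed simp
    qed
    also have "\<dots> = ennreal CA * (\<integral>\<^sup>+ \<rho>. W \<rho> * GJ \<rho> * indicator {0<..<1} \<rho> \<partial>lborel)
           + ennreal CB * (\<integral>\<^sup>+ \<rho>. ennreal (\<rho> powr (b - 1)) * indicator {0<..<1} \<rho> \<partial>lborel)"
      by (simp add: nn_integral_add nn_integral_cmult)
    also have "\<dots> \<le> ennreal CA * Bd + ennreal CB * ennreal (1/b)"
      unfolding Bd_def using int_pow_lborel[OF b, of 1] by (intro add_mono mult_left_mono) auto
    finally show ?thesis .
  qed
  have pinv: "0 < 1/p" "1/p \<le> 1" using p by auto
  have "enn_powr (\<integral>\<^sup>+ \<rho>\<in>{0<..<1}. W \<rho> * GI \<rho> \<partial>lborel) (1/p)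
      \<le> enn_powr (ennreal CA * Bd + ennreal (CB / b)) (1/p)"
    using partC b CB p by (intro enn_powr_mono) (auto simp: ennreal_mult[symmetric] divide_inverse)
  also have "\<dots> \<le> enn_powr (ennreal CA * Bd) (1/p) + enn_powr (ennreal (CB / b)) (1/p)"
    by (rule enn_powr_add_le[OF pinv])
  also have "\<dots> = ennreal (CA powr (1/p)) * enn_powr Bd (1/p) + ennreal ((CB / b) powr (1/p))"
    using CA CB b pinv by (simp add: enn_powr_mult enn_powr_ennreal)
  also have "(CB / b) powr (1/p) = m * (2 powr p * (3 * Q3) / b) powr (1/p)"
  proof -
    have e: "CB / b = m powr p * (2 powr p * (3 * Q3) / b)" by (simp add: CB_def)
    have "(CB / b) powr (1/p) = (m powr p) powr (1/p) * (2 powr p * (3 * Q3) / b) powr (1/p)"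
      unfolding e using m Q3 b by (intro powr_mult)
    also have "(m powr p) powr (1/p) = m" using m p by (simp add: powr_powr)
    finally show ?thesis .
  qed
  finally have dpart: "enn_powr (\<integral>\<^sup>+ \<rho>\<in>{0<..<1}. W \<rho> * GI \<rho> \<partial>lborel) (1/p)
      \<le> ennreal (CA powr (1/p)) * enn_powr Bd (1/p) + ennreal (m * (2 powr p * (3 * Q3) / b) powr (1/p))" .
  have "besov_norm p p (1/p - 1/2) I f = Lq_norm p I f + enn_powr (\<integral>\<^sup>+ \<rho>\<in>{0<..<1}. W \<rho> * GI \<rho> \<partial>lborel) (1/p)"
    unfolding besov_norm_def W_def GI_def s0_def ..
  also have "\<dots> \<le> ennreal (m * Q1 powr (1/p)) + (ennreal (CA powr (1/p)) * enn_powr Bd (1/p) + ennreal (m * (2 powr p * (3 * Q3) / b) powr (1/p)))"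
    by (intro add_mono partA dpart)
  finally show ?thesis unfolding I_def f_def Q1_def CA_def Wc_def Bd_def W_def GJ_def J_def s0_def b_def Q3_def
    by (simp add: add.assoc)
qed



lemma SUP_zero_enn[simp]: "(SUP x\<in>A. (0::ennreal)) = 0"
  by (cases "A = {}") (auto simp: bot_ennreal)

lemma besov_empty: "besov_norm q r sm {} f = 0"
  by (simp add: besov_norm_def Lq_norm_def)

lemma coef_fin:
  fixes m X1 X2 X3 K E L B :: "real" and EE LL BB :: ennreal
  assumes "0 \<le> m" "0 \<le> X1" "0 \<le> X2" "0 \<le> X3" "X1 + X3 \<le> K" "X2 \<le> K"
    and "EE \<le> BB"
  shows "ennreal (m * X1) + ennreal X2 * EE + ennreal (m * X3) \<le> ennreal K * (ennreal m + BB)"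
proof -
  have "ennreal (m * X1) + ennreal X2 * EE + ennreal (m * X3) = ennreal (m * (X1 + X3)) + ennreal X2 * EE"
    using assms by (simp add: distrib_left ennreal_plus[symmetric] add_ac del: ennreal_plus)
  also have "\<dots> \<le> ennreal (m * K) + ennreal K * BB"
    using assms by (intro add_mono ennreal_leI mult_left_mono mult_mono) auto
  also have "\<dots> = ennreal K * (ennreal m + BB)"
    using assms by (simp add: distrib_left ennreal_mult mult.commute)
  finally show ?thesis .
qed


theorem lemmaA3:
  fixes \<Phi> :: "real \<Rightarrow> 'a::banach"
    and \<tau> \<alpha> q T :: real
  assumes T: "T > 0"
    and type: "rademacher_type TYPE('a) \<tau>" and tau: "1 \<le> \<tau>" "\<tau> < 2"
    and alpha: "0 \<le> \<alpha>" "\<alpha> < 1/2"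
    and q: "2 < q"
    and qa: "1 / q < 1 / \<tau> - \<alpha>"
    and meas: "strongly_measurable_on {0<..<T} \<Phi>"
    and besov: "besov_norm q \<tau> (1/\<tau> - 1/2) {0<..<T} \<Phi> < \<infinity>"
    and linf: "Linf_norm {0<..<T} \<Phi> < \<infinity>"
  shows "\<exists>\<epsilon>0 > 0. \<exists>C \<ge> 0. \<forall>T0 \<in> {0..T}.
     (SUP t\<in>{0..T0}. besov_norm \<tau> \<tau> (1/\<tau> - 1/2) {0<..<t} (\<lambda>s. (t - s) powr (- \<alpha>) *\<^sub>R \<Phi> s))
       \<le> ennreal (C * T0 powr \<epsilon>0) *
         (Linf_norm {0<..<T0} \<Phi> + besov_norm q \<tau> (1/\<tau> - 1/2) {0<..<T0} \<Phi>)"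
proof -
  obtain N \<Psi> where N: "N \<in> null_sets lebesgue" "\<And>s. s \<in> {0<..<T} \<Longrightarrow> s \<notin> N \<Longrightarrow> \<Psi> s = \<Phi> s"
    and \<Psi>m: "\<And>h. (\<lambda>s. norm (\<Psi> (s + h) - \<Psi> s)) \<in> borel_measurable lebesgue"
    by (rule sm_repr[OF meas]) blast
  define p where "p = \<tau>"
  define a where "a = \<alpha>"
  define g where "g = 1/\<tau> - 1/4 - \<alpha>/2"
  define r' where "r' = q / \<tau>"
  define r where "r = q / (q - \<tau>)"
  define k where "k = (a+g)*p"
  define b where "b = (g - (1/p - 1/2)) * p"
  have tp: "0 < \<tau>" using tau by simp
  have a: "0 \<le> a" "a \<le> 1" using alpha by (auto simp: a_def)
  have g: "0 \<le> g" "g \<le> 1"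
  proof -
    have "1/2 < 1/\<tau>" using tau by (simp add: field_simps)
    then show "0 \<le> g" using alpha by (simp add: g_def)
    have "1/\<tau> \<le> 1" using tau by simp
    then show "g \<le> 1" using alpha by (simp add: g_def)
  qed
  have p: "1 \<le> p" using tau by (simp add: p_def)
  have kk: "(a+g)*p < 1"
  proof -
    have "(a+g)*p = 1 + \<tau> * (\<alpha>/2 - 1/4)" using tp by (simp add: a_def g_def p_def field_simps)
    moreover have "\<tau> * (\<alpha>/2 - 1/4) < 0" using tp alpha by (intro mult_pos_neg) auto
    ultimately show ?thesis by simp
  qed
  have r: "r > 1" "r' > 1" "1/r + 1/r' = 1" "p * r' = q" "a*p*r < 1"
  proof -
    show "r > 1" using q tau by (simp add: r_def field_simps)
    show "r' > 1" using q tau by (simp add: r'_def field_simps)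
    show "1/r + 1/r' = 1" using q tau by (simp add: r_def r'_def field_simps)
    show "p * r' = q" using tp by (simp add: p_def r'_def)
    have "\<alpha> * \<tau> * q < q - \<tau>"
    proof -
      have "\<alpha> < 1/\<tau> - 1/q" using qa by simp
      then have "\<alpha> * (\<tau> * q) < (1/\<tau> - 1/q) * (\<tau> * q)" using tp q by (intro mult_strict_right_mono) auto
      also have "\<dots> = q - \<tau>" using tp q by (simp add: field_simps)
      finally show ?thesis by (simp add: mult.assoc)
    qed
    then show "a*p*r < 1" using q tau by (simp add: a_def p_def r_def field_simps)
  qed
  have gs: "1/p - 1/2 < g" using alpha by (simp add: g_def p_def)
  have b: "0 < b" using gs p by (simp add: b_def)
  have ap: "a * p < 1"
  proof -
    have "a * p * 1 \<le> a * p * r" using a p r by (intro mult_left_mono) auto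
    then show ?thesis using r by simp
  qed
  have apr0: "0 \<le> a * p * r" using a p r by simp
  define e1 where "e1 = (1 - a*p) * (1/p)"
  define e2 where "e2 = ((1 - a*p*r) / r) * (1/p)"
  define e3 where "e3 = (1 - k) * (1/p)"
  define eps where "eps = min e2 e3"
  have e2p: "0 < e2" using r p by (simp add: e2_def)
  have e3p: "0 < e3" using kk p by (simp add: e3_def k_def)
  have epsp: "0 < eps" using e2p e3p by (simp add: eps_def)
  have e12: "e2 \<le> e1"
  proof -
    have "(1 - a*p*r) / r = 1/r - a*p" using r by (simp add: field_simps)
    moreover have "1/r \<le> 1" using r by simp
    ultimately have "(1 - a*p*r) / r \<le> 1 - a*p" by simp
    then show ?thesis using p unfolding e1_def e2_def by (intro mult_right_mono) auto
  qed
  define c1 where "c1 = 1 / (1 - a*p)"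
  define c2 where "c2 = 2 powr p * (2 * (1 / (1 - a*p*r)) powr (1/r))"
  define c3 where "c3 = 2 powr p * 3 / ((1 - k) * b)"
  have c0: "0 \<le> c1" "0 \<le> c2" "0 \<le> c3" using ap kk b by (auto simp: c1_def c2_def c3_def k_def)
  define C1 where "C1 = c1 powr (1/p) * T powr ((1 - a*p) * (1/p) - eps)"
  define C2 where "C2 = c2 powr (1/p) * T powr (((1 - a*p*r) / r) * (1/p) - eps)"
  define C3 where "C3 = c3 powr (1/p) * T powr ((1 - k) * (1/p) - eps)"
  define C where "C = C1 + C2 + C3 + 1"
  have C0: "0 \<le> C1" "0 \<le> C2" "0 \<le> C3" by (simp_all add: C1_def C2_def C3_def)
  have Cp: "0 < C" using C0 by (simp add: C_def)
  have main: "\<forall>T0 \<in> {0..T}. (SUP t\<in>{0..T0}. besov_norm \<tau> \<tau> (1/\<tau> - 1/2) {0<..<t} (\<lambda>s. (t - s) powr (- \<alpha>) *\<^sub>R \<Phi> s))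
       \<le> ennreal (C * T0 powr eps) *
         (Linf_norm {0<..<T0} \<Phi> + besov_norm q \<tau> (1/\<tau> - 1/2) {0<..<T0} \<Phi>)"
  proof
    fix T0 assume T0: "T0 \<in> {0..T}"
    show "(SUP t\<in>{0..T0}. besov_norm \<tau> \<tau> (1/\<tau> - 1/2) {0<..<t} (\<lambda>s. (t - s) powr (- \<alpha>) *\<^sub>R \<Phi> s))
       \<le> ennreal (C * T0 powr eps) *
         (Linf_norm {0<..<T0} \<Phi> + besov_norm q \<tau> (1/\<tau> - 1/2) {0<..<T0} \<Phi>)"
    proof (rule SUP_least)
      fix t assume t: "t \<in> {0..T0}"
      show "besov_norm \<tau> \<tau> (1/\<tau> - 1/2) {0<..<t} (\<lambda>s. (t - s) powr (- \<alpha>) *\<^sub>R \<Phi> s)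
        \<le> ennreal (C * T0 powr eps) * (Linf_norm {0<..<T0} \<Phi> + besov_norm q \<tau> (1/\<tau> - 1/2) {0<..<T0} \<Phi>)"
      proof (cases "t = 0")
        case True then show ?thesis by (simp add: besov_empty)
      next
        case False
        then have t: "0 < t" "t \<le> T0" using t by auto
        have T0p: "0 < T0" "T0 \<le> T" using t T0 by auto
        have CT: "0 < C * T0 powr eps" using Cp T0p by simp
        show ?thesis
        proof (cases "Linf_norm {0<..<T0} \<Phi> = top")
          case True
          have "ennreal (C * T0 powr eps) * (Linf_norm {0<..<T0} \<Phi> + besov_norm q \<tau> (1/\<tau> - 1/2) {0<..<T0} \<Phi>) = top"
            using True CT Cp T0p by (simp add: ennreal_mult_top)
          then show ?thesis by simp
        next
          case False
          define m where "m = enn2real (Linf_norm {0<..<T0} \<Phi>)"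
          have Lm: "Linf_norm {0<..<T0} \<Phi> = ennreal m" "0 \<le> m" using False
            by (auto simp: m_def top.not_eq_extremum intro: ennreal_enn2real[symmetric])
          have mae: "AE s in lebesgue. s \<in> {0<..<T0} \<longrightarrow> norm (\<Phi> s) \<le> m"
            using linf_ae[OF False] by (simp add: m_def)
          have N2: "\<And>s. s \<in> {0<..<T0} \<Longrightarrow> s \<notin> N \<Longrightarrow> \<Psi> s = \<Phi> s" using N(2) T0p by auto
          note mt = main_t[OF t a g p kk r gs Lm(2) mae N(1) N2 \<Psi>m]
          define Bd where "Bd = (\<integral>\<^sup>+ \<rho>\<in>{0<..<1}. ennreal (\<rho> powr (- (1/p - 1/2) * p) / \<rho>) *
             enn_powr (SUP h\<in>{h. \<bar>h\<bar> < \<rho>}. Lq_norm q {0<..<T0} (\<lambda>s. transl {0<..<T0} h \<Phi> s - \<Phi> s)) p \<partial>lborel)"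
          define X1 where "X1 = (t powr (1-a*p)/(1-a*p)) powr (1/p)"
          define X2 where "X2 = (2 powr p * (2 * (t powr (1 - a*p*r) / (1 - a*p*r)) powr (1/r))) powr (1/p)"
          define X3 where "X3 = (2 powr p * (3 * (t powr (1-(a+g)*p) / (1-(a+g)*p))) / ((g - (1/p - 1/2)) * p)) powr (1/p)"
          have X0: "0 \<le> X1" "0 \<le> X2" "0 \<le> X3" by (simp_all add: X1_def X2_def X3_def)
          have pp: "0 < 1/p" using p by simp
          have X1b: "X1 \<le> C1 * T0 powr eps"
          proof -
            have "X1 = (c1 * t powr (1-a*p)) powr (1/p)" by (simp add: X1_def c1_def)
            also have "\<dots> \<le> (c1 powr (1/p) * T powr ((1-a*p)*(1/p) - eps)) * T0 powr eps"
              using e12 c0 by (intro tpow t T0p epsp pp) (auto simp: eps_def e1_def)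
            finally show ?thesis by (simp add: C1_def)
          qed
          have X2b: "X2 \<le> C2 * T0 powr eps"
          proof -
            have "(t powr (1 - a*p*r) / (1 - a*p*r)) powr (1/r) = (1 / (1 - a*p*r)) powr (1/r) * t powr ((1 - a*p*r) / r)"
            proof -
              define y where "y = 1 - a*p*r"
              have y: "0 < y" using r by (simp add: y_def)
              have "(t powr y / y) powr (1/r) = (t powr y) powr (1/r) / y powr (1/r)"
                using y t by (intro powr_divide)
              also have "\<dots> = t powr (y/r) / y powr (1/r)" by (simp add: powr_powr)
              also have "\<dots> = (1 / y) powr (1/r) * t powr (y / r)" using y by (simp add: powr_divide)
              finally show ?thesis unfolding y_def .
            qed
            then have "X2 = (c2 * t powr ((1 - a*p*r) / r)) powr (1/p)" by (simp add: X2_def c2_def mult.assoc)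
            also have "\<dots> \<le> (c2 powr (1/p) * T powr (((1 - a*p*r) / r)*(1/p) - eps)) * T0 powr eps"
              using c0 by (intro tpow t T0p epsp pp) (auto simp: eps_def e2_def)
            finally show ?thesis by (simp add: C2_def)
          qed
          have X3b: "X3 \<le> C3 * T0 powr eps"
          proof -
            have "X3 = (c3 * t powr (1 - k)) powr (1/p)"
              by (simp add: X3_def c3_def k_def b_def mult.assoc)
            also have "\<dots> \<le> (c3 powr (1/p) * T powr ((1 - k)*(1/p) - eps)) * T0 powr eps"
              using c0 by (intro tpow t T0p epsp pp) (auto simp: eps_def e3_def)
            finally show ?thesis by (simp add: C3_def)
          qed
          have T0e: "0 \<le> T0 powr eps" by simp
          have K1: "X1 + X3 \<le> C * T0 powr eps"
          proof -
            have "X1 + X3 \<le> C1 * T0 powr eps + C3 * T0 powr eps" using X1b X3b by simp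
            also have "\<dots> \<le> C * T0 powr eps" using C0 T0e by (simp add: C_def distrib_right[symmetric] mult_right_mono)
            finally show ?thesis .
          qed
          have K2: "X2 \<le> C * T0 powr eps"
          proof -
            have "C2 * T0 powr eps \<le> C * T0 powr eps" using C0 T0e by (intro mult_right_mono) (auto simp: C_def)
            then show ?thesis using X2b by simp
          qed
          have EB: "enn_powr Bd (1/\<tau>) \<le> besov_norm q \<tau> (1/\<tau> - 1/2) {0<..<T0} \<Phi>"
            unfolding besov_norm_def Bd_def p_def by (intro add_increasing) auto
          have "besov_norm \<tau> \<tau> (1/\<tau> - 1/2) {0<..<t} (\<lambda>s. (t - s) powr (- \<alpha>) *\<^sub>R \<Phi> s)
              \<le> ennreal (m * X1) + ennreal X2 * enn_powr Bd (1/\<tau>) + ennreal (m * X3)"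
            using mt unfolding X1_def X2_def X3_def Bd_def p_def a_def .
          also have "\<dots> \<le> ennreal (C * T0 powr eps) * (ennreal m + besov_norm q \<tau> (1/\<tau> - 1/2) {0<..<T0} \<Phi>)"
            by (rule coef_fin[OF Lm(2) X0 K1 K2 EB])
          finally show ?thesis unfolding Lm(1) .
        qed
      qed
    qed
  qed
  have C0': "0 \<le> C" using Cp by simp
  show ?thesis
    by (rule exI[of _ eps], rule conjI[OF epsp], rule exI[of _ C], rule conjI[OF C0' main])
qed


end
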